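(* For every real skew-symmetric matrix $S$ there exist real orthogonal matrices $Q_1,Q_2$ and a positive number $c\ge\lambda_{\max}(S)/2$ such that $S=c\,(Q_1+Q_2)$, where $\lambda_{\max}(S)$ is the maximum singular value of $S$. *)

theory Defs
  imports "HOL-Analysis.Analysis"
begin

text \<open>Singular values of a real square matrix A are the square roots of the
eigenvalues of the (symmetric, positive semidefinite) matrix A^T A.\<close>

definition gram_eigenvalues :: "real^'n^'n \<Rightarrow> real set" where
  "gram_eigenvalues A = {l. \<exists>v. v \<noteq> 0 \<and> (transpose A ** A) *v v = l *\<^sub>R v}"

definition max_singular_value :: "real^'n^'n \<Rightarrow> real" where
  "max_singular_value A = sqrt (Max (gram_eigenvalues A))"

definition skew_symmetric :: "real^'n^'n \<Rightarrow> bool" where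
  "skew_symmetric S \<longleftrightarrow> transpose S = - S"

end

theory Submission
  imports Defs
begin

lemma mm_radd: "((A::real^'n^'n) + B) ** C = A ** C + B ** C"
  by (simp add: matrix_matrix_mult_def vec_eq_iff sum.distrib algebra_simps)
lemma mm_rdiff: "((A::real^'n^'n) - B) ** C = A ** C - B ** C"
  by (simp add: matrix_matrix_mult_def vec_eq_iff sum_subtractf algebra_simps)
lemma mm_ldiff: "(A::real^'n^'n) ** (B - C) = A ** B - A ** C"
  by (simp add: matrix_matrix_mult_def vec_eq_iff sum_subtractf algebra_simps)
lemma mm_lscale: "((k::real) *\<^sub>R (A::real^'n^'n)) ** B = k *\<^sub>R (A ** B)"
  by (simp add: matrix_matrix_mult_def vec_eq_iff sum_distrib_left algebra_simps)
lemma mm_rscale: "(A::real^'n^'n) ** ((k::real) *\<^sub>R B) = k *\<^sub>R (A ** B)"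
  by (simp add: matrix_matrix_mult_def vec_eq_iff sum_distrib_left algebra_simps)
lemma mm_lneg: "(- (A::real^'n^'n)) ** B = - (A ** B)"
  by (simp add: matrix_matrix_mult_def vec_eq_iff sum_negf)
lemma mm_rneg: "(A::real^'n^'n) ** (- B) = - (A ** B)"
  by (simp add: matrix_matrix_mult_def vec_eq_iff sum_negf)
lemma tr_add: "transpose ((A::real^'n^'n) + B) = transpose A + transpose B"
  by (simp add: transpose_def vec_eq_iff)
lemma tr_diff: "transpose ((A::real^'n^'n) - B) = transpose A - transpose B"
  by (simp add: transpose_def vec_eq_iff)
lemma tr_neg: "transpose (- (A::real^'n^'n)) = - transpose A"
  by (simp add: transpose_def vec_eq_iff)

lemma norm_sq_mat: "(norm (A::real^'m^'k))^2 = (\<Sum>i\<in>UNIV. \<Sum>j\<in>UNIV. (A$i$j)^2)"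
  unfolding power2_norm_eq_inner inner_vec_def by (simp add: power2_eq_square)

lemma norm_mm: "norm ((A::real^'n^'n) ** (B::real^'n^'n)) \<le> norm A * norm B"
proof -
  define v where "v j = (\<chi> k. B$k$j)" for j
  have e: "(A ** B)$i$j = inner (A$i) (v j)" for i j
    by (simp add: matrix_matrix_mult_def v_def inner_vec_def)
  have "(norm (A ** B))^2 = (\<Sum>i\<in>UNIV. \<Sum>j\<in>UNIV. (inner (A$i) (v j))^2)"
    by (simp only: norm_sq_mat e)
  also have "\<dots> \<le> (\<Sum>i\<in>UNIV. \<Sum>j\<in>UNIV. inner (A$i) (A$i) * inner (v j) (v j))"
    by (intro sum_mono Cauchy_Schwarz_ineq)
  also have "\<dots> = (\<Sum>i\<in>UNIV. inner (A$i) (A$i)) * (\<Sum>j\<in>UNIV. inner (v j) (v j))"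
    by (rule sum_product[symmetric])
  also have "(\<Sum>i\<in>UNIV. inner (A$i) (A$i)) = (norm A)^2"
    by (simp only: power2_norm_eq_inner inner_vec_def)
  also have "(\<Sum>j\<in>UNIV. inner (v j) (v j)) = (norm B)^2"
  proof -
    have "(\<Sum>j\<in>UNIV. inner (v j) (v j)) = (\<Sum>j\<in>UNIV. \<Sum>k\<in>UNIV. (B$k$j)^2)"
      by (simp add: v_def inner_vec_def power2_eq_square)
    also have "\<dots> = (\<Sum>k\<in>UNIV. \<Sum>j\<in>UNIV. (B$k$j)^2)" by (rule sum.swap)
    finally show ?thesis by (simp only: norm_sq_mat)
  qed
  finally have "(norm (A ** B))^2 \<le> (norm A * norm B)^2" by (simp add: power_mult_distrib)
  then show ?thesis by (rule power2_le_imp_le) simp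
qed


lemma lin_tr: "linear (\<lambda>E::real^'n^'n. transpose E)"
  by (rule linearI) (simp_all add: tr_add transpose_scalar)
lemma lin_mr: "linear (\<lambda>E::real^'n^'n. E ** (M::real^'n^'n))"
  by (rule linearI) (simp_all add: mm_radd mm_lscale)
lemma lin_ml: "linear (\<lambda>E::real^'n^'n. (M::real^'n^'n) ** E)"
  by (rule linearI) (simp_all add: matrix_add_ldistrib mm_rscale)

lemma cont_lin: "linear (f::real^'n^'n \<Rightarrow> real^'n^'n) \<Longrightarrow> continuous_on UNIV f"
  by (simp add: linear_conv_bounded_linear linear_continuous_on)

theorem mainTheorem18:
  fixes S :: "real^'n^'n"
  assumes "skew_symmetric S"
  shows "\<exists>Q1 Q2 :: real^'n^'n. \<exists>c :: real.
           orthogonal_matrix Q1 \<and> orthogonal_matrix Q2 \<and> c > 0 \<and>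
           c \<ge> max_singular_value S / 2 \<and> S = c *\<^sub>R (Q1 + Q2)"
proof -
  define c where "c = norm S + 1 + \<bar>max_singular_value S\<bar>"
  have cpos: "c > 0" and cS: "norm S \<le> c" and csig: "c \<ge> max_singular_value S / 2"
    using norm_ge_zero[of S] abs_ge_self[of "max_singular_value S"] abs_ge_zero[of "max_singular_value S"]
    unfolding c_def by linarith+
  define M where "M = (1/c) *\<^sub>R S"
  have SM: "S = c *\<^sub>R M" using cpos by (simp add: M_def)
  have trM: "transpose M = - M"
    using assms by (simp add: M_def transpose_scalar skew_symmetric_def)
  have nM: "norm M \<le> 1"
    using cpos cS by (simp add: M_def divide_le_eq)
  define N where "N = (-1/4) *\<^sub>R (M ** M)"
  have nN: "norm N \<le> 1/4"
  proof -
    have "norm (M ** M) \<le> 1"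
      using norm_mm[of M M] nM by (smt (verit) mult_le_one norm_ge_zero)
    then show ?thesis by (simp add: N_def)
  qed
  have trN: "transpose N = N"
    by (simp add: N_def tr_neg transpose_scalar matrix_transpose_mul trM mm_lneg mm_rneg)
  have NM: "N ** M = M ** N"
    by (simp add: N_def mm_lneg mm_rneg mm_lscale mm_rscale matrix_mul_assoc)
  define D where "D = {E::real^'n^'n. transpose E = E \<and> E ** M = M ** E \<and> norm E \<le> 1/2}"
  define f where "f E = (1/2) *\<^sub>R (N + E ** E)" for E :: "real^'n^'n"
  have Deq: "D = {E. transpose E = E} \<inter> {E. E ** M = M ** E} \<inter> cball 0 (1/2)"
    by (auto simp: D_def)
  have "closed D"
    unfolding Deq
    by (intro closed_Int closed_cball closed_Collect_eq cont_lin lin_tr lin_mr lin_ml linear_id[unfolded id_def])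
  then have "complete D" by (simp add: complete_eq_closed)
  moreover have "D \<noteq> {}"
    by (auto simp: D_def transpose_def vec_eq_iff intro!: exI[of _ 0])
  moreover have "f ` D \<subseteq> D"
  proof
    fix y assume "y \<in> f ` D"
    then obtain E where E: "E \<in> D" and y: "y = f E" by auto
    have t: "transpose E = E" and cm: "E ** M = M ** E" and nE: "norm E \<le> 1/2"
      using E by (auto simp: D_def)
    have EEc: "(E ** E) ** M = M ** (E ** E)" by (metis matrix_mul_assoc cm)
    have "transpose y = y"
      by (simp add: y f_def transpose_scalar tr_add trN matrix_transpose_mul t)
    moreover have "y ** M = M ** y"
      by (simp add: y f_def mm_lscale mm_rscale mm_radd matrix_add_ldistrib NM EEc)
    moreover have "norm y \<le> 1/2"
    proof -
      have "norm (E ** E) \<le> 1/4"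
      proof -
        have "norm E * norm E \<le> 1/2 * (1/2)" using nE by (intro mult_mono) auto
        then show ?thesis using norm_mm[of E E] by simp
      qed
      then have "norm (N + E ** E) \<le> 1/2" using nN norm_triangle_ineq[of N "E ** E"] by linarith
      then show ?thesis by (simp add: y f_def)
    qed
    ultimately show "y \<in> D" by (simp add: D_def)
  qed
  moreover have "dist (f x) (f y) \<le> 1/2 * dist x y" if "x \<in> D" "y \<in> D" for x y
  proof -
    have nx: "norm x \<le> 1/2" and ny: "norm y \<le> 1/2" using that by (auto simp: D_def)
    have eq: "f x - f y = (1/2) *\<^sub>R (x ** (x - y) + (x - y) ** y)"
      by (simp add: f_def mm_ldiff mm_rdiff algebra_simps)
    have "norm (x ** (x - y) + (x - y) ** y) \<le> norm x * norm (x - y) + norm (x - y) * norm y"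
      using norm_triangle_ineq[of "x ** (x - y)" "(x - y) ** y"] norm_mm[of x "x - y"] norm_mm[of "x - y" y]
      by linarith
    also have "\<dots> \<le> 1/2 * norm (x - y) + norm (x - y) * (1/2)"
      using nx ny by (intro add_mono mult_right_mono mult_left_mono) auto
    finally have "norm (x ** (x - y) + (x - y) ** y) \<le> norm (x - y)" by simp
    then show ?thesis by (simp add: dist_norm eq)
  qed
  ultimately have "\<exists>!E\<in>D. f E = E"
    by (intro Banach_fix[of D "1/2" f]) auto
  then obtain E where ED: "E \<in> D" and fE: "f E = E" by auto
  have t: "transpose E = E" and cm: "E ** M = M ** E"
    using ED by (auto simp: D_def)
  have "2 *\<^sub>R f E = 2 *\<^sub>R E" using fE by simp
  then have "N + E ** E = 2 *\<^sub>R E" by (simp add: f_def)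
  then have EE: "E ** E = 2 *\<^sub>R E - N" by (metis add_diff_cancel_left')
  define R where "R = mat 1 - E"
  have RR: "R ** R = mat 1 - N"
    by (simp add: R_def mm_ldiff mm_rdiff EE scaleR_2)
  have RM: "R ** M = M ** R"
    by (simp add: R_def mm_ldiff mm_rdiff cm)
  have trR: "transpose R = R"
    by (simp add: R_def tr_diff t)
  define Q1 where "Q1 = (1/2) *\<^sub>R M + R"
  define Q2 where "Q2 = (1/2) *\<^sub>R M - R"
  have tQ1: "transpose Q1 = R - (1/2) *\<^sub>R M"
    by (simp add: Q1_def tr_add transpose_scalar trM trR)
  have tQ2: "transpose Q2 = - R - (1/2) *\<^sub>R M"
    by (simp add: Q2_def tr_diff transpose_scalar trM trR)
  have NN: "N = - ((1/4) *\<^sub>R (M ** M))" by (simp add: N_def)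
  have "transpose Q1 ** Q1 = (R ** R - (1/4) *\<^sub>R (M ** M)) + ((1/2) *\<^sub>R (R ** M) - (1/2) *\<^sub>R (M ** R))"
    unfolding tQ1 unfolding Q1_def
    by (simp only: mm_rdiff matrix_add_ldistrib mm_lscale mm_rscale scaleR_scaleR) (simp add: algebra_simps)
  also have "\<dots> = mat 1" by (simp add: RM RR NN)
  finally have o1: "orthogonal_matrix Q1" by (simp add: orthogonal_matrix)
  have "transpose Q2 ** Q2 = (R ** R - (1/4) *\<^sub>R (M ** M)) + ((1/2) *\<^sub>R (M ** R) - (1/2) *\<^sub>R (R ** M))"
    unfolding tQ2 unfolding Q2_def
    by (simp only: mm_rdiff mm_ldiff mm_lneg mm_lscale mm_rscale scaleR_scaleR) (simp add: algebra_simps)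
  also have "\<dots> = mat 1" by (simp add: RM RR NN)
  finally have o2: "orthogonal_matrix Q2" by (simp add: orthogonal_matrix)
  have "S = c *\<^sub>R (Q1 + Q2)"
    by (simp add: SM Q1_def Q2_def flip: scaleR_add_left)
  then show ?thesis using o1 o2 cpos csig by blast
qed

end
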